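(* Let $D\ge 2$ be a square-free integer, let $K=\mathbb{Q}(\sqrt{D})$ with ring of integers $\mathbb{Z}_K$, and fix the real embedding of $K$ sending $\sqrt D$ to the positive square root of $D$. Let $u_f\in\mathbb{Z}_K^\times$ be the fundamental unit of $K$ that is $>1$ under this embedding, and let $u_D=u_f^2$ if $u_f$ has norm $-1$, and $u_D=u_f$ otherwise (so $u_D$ is the first positive power of $u_f$ of norm $1$). Then the following are equivalent for an integer $d$: (i) $d$ is a positive integer such that the square-free part of $(d-1)^2-4$ is equal to $D$; (ii) $\frac{d-1}{2}$ is the rational part of $u_D^r$ for some $r\in\mathbb{N}$.
   Context: The rational part of an element $a+b\sqrt D\in K$ with $a,b\in\mathbb{Q}$ is $a$. The square-free part of a nonzero integer $m$ is the unique square-free integer $s$ with $m=s\,n^2$ for some integer $n$. *)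

theory Defs
  imports Complex_Main "HOL-Computational_Algebra.Polynomial" "HOL-Computational_Algebra.Squarefree"
begin

definition qfield :: "int \<Rightarrow> real set" where
  "qfield D = {x. \<exists>a b :: rat. x = of_rat a + of_rat b * sqrt (of_int D)}"

definition rat_part :: "int \<Rightarrow> real \<Rightarrow> rat" where
  "rat_part D x = (THE a. \<exists>b :: rat. x = of_rat a + of_rat b * sqrt (of_int D))"

definition sqrt_coeff :: "int \<Rightarrow> real \<Rightarrow> rat" where
  "sqrt_coeff D x = (THE b. \<exists>a :: rat. x = of_rat a + of_rat b * sqrt (of_int D))"

definition qnorm :: "int \<Rightarrow> real \<Rightarrow> rat" where
  "qnorm D x = (rat_part D x)^2 - of_int D * (sqrt_coeff D x)^2"

definition ring_of_integers :: "int \<Rightarrow> real set" where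
  "ring_of_integers D = {x \<in> qfield D. algebraic_int x}"

definition qunits :: "int \<Rightarrow> real set" where
  "qunits D = {x \<in> ring_of_integers D. x \<noteq> 0 \<and> inverse x \<in> ring_of_integers D}"

definition is_fundamental_unit :: "int \<Rightarrow> real \<Rightarrow> bool" where
  "is_fundamental_unit D u \<longleftrightarrow> u \<in> qunits D \<and> u > 1 \<and>
     (\<forall>v \<in> qunits D. \<exists>n :: int. v = u powi n \<or> v = - (u powi n))"

definition sqfree_part :: "int \<Rightarrow> int" where
  "sqfree_part m = (THE s. squarefree s \<and> (\<exists>n :: int. m = s * n^2))"

end

theory Submission
  imports Defs
begin



definition mk :: "int \<Rightarrow> rat \<Rightarrow> rat \<Rightarrow> real" where
  "mk D a b = of_rat a + of_rat b * sqrt (of_int D)"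

lemma sqrt_not_rat:
  assumes "D \<ge> 2" "squarefree D"
  shows "sqrt (real_of_int D) \<notin> \<rat>"
proof
  assume "sqrt (real_of_int D) \<in> \<rat>"
  then obtain a b where ab: "b > 0" "coprime a b" and x: "sqrt (real_of_int D) = of_int a / of_int b"
    by (auto elim: Rats_cases')
  have "real_of_int D = (of_int a / of_int b)^2" using x[symmetric] assms by simp
  hence "real_of_int (D * b^2) = real_of_int (a^2)" using ab by (simp add: field_simps power2_eq_square)
  hence eq: "D * b^2 = a^2" by (simp only: of_int_eq_iff)
  have "b dvd a^2" by (simp add: eq[symmetric])
  moreover have "coprime (a^2) b" using ab(2) by simp
  ultimately have "b dvd 1" using coprime_common_divisor[of "a^2" b b] by simp
  hence "b = 1" using ab(1) by simp
  hence "D = a^2" using eq by simp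
  hence "a^2 dvd D" by simp
  hence "a dvd 1" using assms(2) squarefreeD by blast
  hence "\<bar>a\<bar> = 1" by (simp add: zdvd1_eq)
  hence "a^2 = 1" by (metis power2_abs one_power2)
  thus False using \<open>D = a^2\<close> assms(1) by simp
qed

lemma mk_inj:
  assumes "D \<ge> 2" "squarefree D"
  shows "mk D a b = mk D c e \<longleftrightarrow> a = c \<and> b = e"
proof
  assume h: "mk D a b = mk D c e"
  show "a = c \<and> b = e"
  proof (cases "b = e")
    case True thus ?thesis using h by (simp add: mk_def)
  next
    case False
    have "of_rat (b - e) * sqrt (real_of_int D) = of_rat (c - a)" using h by (simp add: mk_def of_rat_diff algebra_simps)
    hence "sqrt (real_of_int D) = of_rat ((c - a) / (b - e))" using False
      by (simp add: of_rat_divide field_simps)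
    hence "sqrt (real_of_int D) \<in> \<rat>" by simp
    thus ?thesis using sqrt_not_rat[OF assms] by simp
  qed
qed simp

lemma mk_add: "mk D a b + mk D c e = mk D (a+c) (b+e)"
  by (simp add: mk_def of_rat_add algebra_simps)
lemma mk_diff: "mk D a b - mk D c e = mk D (a-c) (b-e)"
  by (simp add: mk_def of_rat_diff algebra_simps)
lemma mk_minus: "- mk D a b = mk D (-a) (-b)"
  by (simp add: mk_def of_rat_minus algebra_simps)
lemma mk_rat: "of_rat c = mk D c 0"
  by (simp add: mk_def)
lemma mk_scale: "of_rat c * mk D a b = mk D (c*a) (c*b)"
  by (simp add: mk_def of_rat_mult algebra_simps)
lemma mk_mult:
  assumes "D \<ge> 0"
  shows "mk D a b * mk D c e = mk D (a*c + of_int D*b*e) (a*e + b*c)"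
proof -
  define r where "r = sqrt (real_of_int D)"
  have s: "r * r = real_of_int D" using assms by (simp add: r_def)
  have "mk D a b * mk D c e = of_rat a * of_rat c + (of_rat a * of_rat e + of_rat b * of_rat c) * r + of_rat b * of_rat e * (r * r)"
    by (simp add: mk_def r_def[symmetric] algebra_simps)
  also have "\<dots> = of_rat a * of_rat c + (of_rat a * of_rat e + of_rat b * of_rat c) * r + of_rat b * of_rat e * real_of_int D"
    by (simp only: s)
  also have "\<dots> = mk D (a*c + of_int D*b*e) (a*e + b*c)"
    by (simp add: mk_def r_def[symmetric] of_rat_add of_rat_mult algebra_simps)
  finally show ?thesis .
qed

lemma qfield_mk: "qfield D = range (\<lambda>(a,b). mk D a b)"
  by (auto simp: qfield_def mk_def)

lemma rat_part_mk:
  assumes "D \<ge> 2" "squarefree D"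
  shows "rat_part D (mk D a b) = a" "sqrt_coeff D (mk D a b) = b"
  unfolding rat_part_def sqrt_coeff_def
  using mk_inj[OF assms] by (auto simp: mk_def[symmetric] intro!: the_equality)

lemma qnorm_mk:
  assumes "D \<ge> 2" "squarefree D"
  shows "qnorm D (mk D a b) = a^2 - of_int D * b^2"
  by (simp add: qnorm_def rat_part_mk[OF assms])




lemma pow_bound_unit:
  fixes v M :: int
  assumes "v \<ge> 1" "M > 0" "\<And>k. k \<ge> 1 \<Longrightarrow> v^k dvd M"
  shows "v = 1"
proof (rule ccontr)
  assume "v \<noteq> 1"
  hence v2: "v \<ge> 2" using assms(1) by simp
  define k where "k = Suc (nat M)"
  have "v^k dvd M" using assms(3)[of k] k_def by linarith
  hence le: "v^k \<le> M" using assms(2) by (simp add: zdvd_imp_le)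
  have "(2::int)^k \<le> v^k" using v2 by (simp add: power_mono)
  moreover have "int k < 2^k" proof -
    have "k < 2^k" by (rule less_exp)
    hence "int k < int (2^k)" by linarith
    thus ?thesis by simp
  qed
  ultimately have "int k < M" using le by linarith
  thus False using k_def assms(2) by simp
qed

lemma rat_int_from_powers:
  fixes r :: rat and C :: int
  assumes "C > 0" "\<And>k. of_int C * r^k \<in> \<int>"
  shows "r \<in> \<int>"
proof -
  obtain u v where q: "quotient_of r = (u, v)" by (cases "quotient_of r")
  have v0: "v > 0" using q quotient_of_denom_pos by blast
  have cp: "coprime u v" using q quotient_of_coprime by blast
  have r: "r = of_int u / of_int v" using q quotient_of_div by blast
  have "v^k dvd C" if "k \<ge> 1" for k
  proof -
    obtain m where m: "of_int C * r^k = (of_int m :: rat)" using assms(2)[of k] by (auto elim: Ints_cases)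
    hence "of_int C * (of_int u)^k = (of_int m * (of_int v)^k :: rat)" using v0 r
      by (simp add: power_divide field_simps)
    hence "C * u^k = m * v^k" by (metis of_int_eq_iff of_int_mult of_int_power)
    hence "v^k dvd C * u^k" by simp
    moreover have "coprime (v^k) (u^k)" using cp by (simp add: coprime_commute)
    ultimately show ?thesis by (simp add: coprime_dvd_mult_left_iff)
  qed
  hence "v = 1" using pow_bound_unit[of v C] v0 assms(1) by simp
  thus ?thesis using r by simp
qed




fun tt :: "rat \<Rightarrow> rat \<Rightarrow> nat \<Rightarrow> rat" where
  "tt s N 0 = 2"
| "tt s N (Suc 0) = s"
| "tt s N (Suc (Suc k)) = s * tt s N (Suc k) - N * tt s N k"

lemma tt_num:
  fixes u v n :: int
  assumes s: "s = of_int u / of_int v" and v0: "v > 0"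
  shows "(\<exists>I. of_int (v^Suc k) * tt s (of_int n) (Suc k) = of_int (u^Suc k + v*I)) \<and>
         (\<exists>I. of_int (v^Suc (Suc k)) * tt s (of_int n) (Suc (Suc k)) = of_int (u^Suc (Suc k) + v*I))"
proof (induction k)
  case 0
  have "of_int (v^Suc 0) * tt s (of_int n) (Suc 0) = of_int (u^Suc 0 + v*0)" using s v0 by simp
  moreover have "of_int (v^Suc (Suc 0)) * tt s (of_int n) (Suc (Suc 0)) = of_int (u^Suc (Suc 0) + v*(-2*n*v))"
    using s v0 by (simp add: field_simps power2_eq_square)
  ultimately show ?case by blast
next
  case (Suc k)
  then obtain I0 I1 where I0: "of_int (v^Suc k) * tt s (of_int n) (Suc k) = of_int (u^Suc k + v*I0)"
    and I1: "of_int (v^Suc (Suc k)) * tt s (of_int n) (Suc (Suc k)) = of_int (u^Suc (Suc k) + v*I1)" by blast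
  have "of_int (v^Suc (Suc (Suc k))) * tt s (of_int n) (Suc (Suc (Suc k)))
      = of_int u * (of_int (v^Suc (Suc k)) * tt s (of_int n) (Suc (Suc k)))
        - of_int n * of_int (v^2) * (of_int (v^Suc k) * tt s (of_int n) (Suc k))"
  proof -
    have u': "rat_of_int u = s * rat_of_int v" using s v0 by simp
    show ?thesis by (simp add: u' algebra_simps power2_eq_square)
  qed
  also have "\<dots> = of_int (u^Suc (Suc (Suc k)) + v * (u*I1 - n*v*u^Suc k - n*v^2*I0))"
    unfolding I0 I1 by (simp add: algebra_simps power2_eq_square)
  finally show ?case using I1 by blast
qed

lemma rat_int_from_trace:
  fixes s N :: rat and M :: int
  assumes "N \<in> \<int>" "M > 0" "\<And>k. of_int M * tt s N k \<in> \<int>"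
  shows "s \<in> \<int>"
proof -
  obtain n where n: "N = of_int n" using assms(1) by (auto elim: Ints_cases)
  obtain u v where q: "quotient_of s = (u, v)" by (cases "quotient_of s")
  have v0: "v > 0" using q quotient_of_denom_pos by blast
  have cp: "coprime u v" using q quotient_of_coprime by blast
  have s: "s = of_int u / of_int v" using q quotient_of_div by blast
  have "v^k dvd M" if "k \<ge> 1" for k
  proof -
    define k' where "k' = k - 1"
    have k': "k = Suc k'" using that k'_def by simp
    obtain I where I: "of_int (v^k) * tt s N k = of_int (u^k + v*I)"
      using tt_num[OF s v0, of k' n] n k' by blast
    obtain m where m: "of_int M * tt s N k = (of_int m :: rat)" using assms(3)[of k] by (auto elim: Ints_cases)
    have "of_int M * of_int (u^k + v*I) = (of_int m * of_int (v^k) :: rat)"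
      using I m by (metis mult.assoc mult.commute)
    hence "M * (u^k + v*I) = m * v^k" by (metis of_int_eq_iff of_int_mult)
    hence "v^k dvd M * (u^k + v*I)" by simp
    moreover have "coprime (v^k) (u^k + v*I)"
    proof -
      have "coprime v (u^k)" using cp by (simp add: coprime_commute)
      moreover have "gcd v (I*v + u^k) = gcd v (u^k)" by (rule gcd_add_mult)
      ultimately have "coprime v (I*v + u^k)" by (simp add: coprime_iff_gcd_eq_1)
      hence "coprime v (u^k + v*I)" by (simp add: add.commute mult.commute)
      thus ?thesis by simp
    qed
    ultimately show ?thesis by (simp add: coprime_dvd_mult_left_iff)
  qed
  hence "v = 1" using pow_bound_unit[of v M] v0 assms(2) by simp
  thus ?thesis using s by simp
qed




lemma poly_conj:
  fixes p :: "real poly"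
  assumes "D \<ge> 0" "\<forall>i. coeff p i \<in> \<rat>"
  shows "\<exists>A B. poly p (mk D a b) = mk D A B \<and> poly p (mk D a (-b)) = mk D A (-B)"
  using assms(2)
proof (induction p)
  case 0
  show ?case by (rule exI[of _ 0], rule exI[of _ 0]) (simp add: mk_def)
next
  case (pCons c p)
  have "\<forall>i. coeff p i \<in> \<rat>" using pCons.prems by (metis coeff_pCons_Suc)
  then obtain A B where AB: "poly p (mk D a b) = mk D A B" "poly p (mk D a (-b)) = mk D A (-B)"
    using pCons.IH by blast
  have "c \<in> \<rat>" using pCons.prems by (metis coeff_pCons_0)
  then obtain c0 where c0: "c = of_rat c0" by (auto elim: Rats_cases)
  show ?case
    apply (rule exI[of _ "c0 + (a*A + of_int D*b*B)"], rule exI[of _ "a*B + b*A"])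
    apply (simp add: AB c0 mk_mult[OF assms(1)] mk_rat[of c0 D] mk_add)
    done
qed

lemma conj_root:
  fixes p :: "real poly"
  assumes "D \<ge> 2" "squarefree D" "\<forall>i. coeff p i \<in> \<rat>" "poly p (mk D a b) = 0"
  shows "poly p (mk D a (-b)) = 0"
proof -
  obtain A B where AB: "poly p (mk D a b) = mk D A B" "poly p (mk D a (-b)) = mk D A (-B)"
    using poly_conj[of D p a b] assms by auto
  have "mk D A B = mk D 0 0" using AB assms(4) by (simp add: mk_def)
  hence "A = 0" "B = 0" using mk_inj[OF assms(1,2)] by auto
  thus ?thesis using AB by (simp add: mk_def)
qed

definition inT :: "int \<Rightarrow> int \<Rightarrow> real \<Rightarrow> bool" where
  "inT D M z \<longleftrightarrow> (\<exists>A B::int. z = mk D (of_int A / of_int M) (of_int B / of_int M))"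

lemma inT_add: "inT D M z \<Longrightarrow> inT D M w \<Longrightarrow> inT D M (z + w)"
  unfolding inT_def
proof (elim exE)
  fix A B A' B'
  assume "z = mk D (of_int A / of_int M) (of_int B / of_int M)" "w = mk D (of_int A' / of_int M) (of_int B' / of_int M)"
  thus "\<exists>A B. z + w = mk D (of_int A / of_int M) (of_int B / of_int M)"
    by (intro exI[of _ "A+A'"] exI[of _ "B+B'"]) (simp add: mk_add add_divide_distrib)
qed

lemma inT_scale: "inT D M z \<Longrightarrow> inT D M (of_int c * z)"
  unfolding inT_def
proof (elim exE)
  fix A B
  assume "z = mk D (of_int A / of_int M) (of_int B / of_int M)"
  moreover have "(of_int c :: real) = of_rat (of_int c)" by simp
  ultimately show "\<exists>A B. of_int c * z = mk D (of_int A / of_int M) (of_int B / of_int M)"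
    by (intro exI[of _ "c*A"] exI[of _ "c*B"]) (simp only: mk_scale, simp)
qed

lemma inT_zero: "inT D M 0"
  unfolding inT_def by (intro exI[of _ 0]) (simp add: mk_def)

lemma inT_sum: "(\<And>i. i < (n::nat) \<Longrightarrow> inT D M (f i)) \<Longrightarrow> inT D M (\<Sum>i<n. f i)"
  by (induction n) (auto simp: inT_zero inT_add)

lemma inT_lift:
  assumes "K \<noteq> 0" "inT D M z" shows "inT D (M*K) z"
  using assms(2) unfolding inT_def
proof (elim exE)
  fix A B
  assume "z = mk D (of_int A / of_int M) (of_int B / of_int M)"
  thus "\<exists>A B. z = mk D (of_int A / of_int (M*K)) (of_int B / of_int (M*K))"
    using assms(1) by (intro exI[of _ "A*K"] exI[of _ "B*K"]) simp
qed

lemma inT_pow: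
  assumes "D \<ge> 0" "L > 0"
  shows "inT D (L^j) ((mk D (of_int a1 / of_int L) (of_int b1 / of_int L))^j)"
proof (induction j)
  case 0
  show ?case unfolding inT_def by (intro exI[of _ 1] exI[of _ 0]) (simp add: mk_def)
next
  case (Suc j)
  then obtain A B where AB: "(mk D (of_int a1 / of_int L) (of_int b1 / of_int L))^j
     = mk D (of_int A / of_int (L^j)) (of_int B / of_int (L^j))" unfolding inT_def by blast
  show ?case unfolding inT_def power_Suc2 AB mk_mult[OF assms(1)]
    using assms(2)
    by (intro exI[of _ "A*a1 + D*B*b1"] exI[of _ "A*b1 + B*a1"]) (simp add: field_simps)
qed

lemma alg_powers:
  fixes p :: "real poly"
  assumes "D \<ge> 0" "L > 0" and x: "x = mk D (of_int a1 / of_int L) (of_int b1 / of_int L)"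
    and p: "lead_coeff p = 1" "\<forall>i. coeff p i \<in> \<int>" "poly p x = 0"
  shows "inT D (L ^ degree p) (x^k)"
proof (induction k rule: less_induct)
  case (less k)
  define n where "n = degree p"
  show ?case
  proof (cases "k \<le> n")
    case True
    have "inT D (L^k * L^(n-k)) (x^k)"
      using inT_lift[OF _ inT_pow[OF assms(1,2), of k a1 b1]] assms(2) x by simp
    moreover have "L^k * L^(n-k) = L^n" using True by (simp flip: power_add)
    ultimately show ?thesis by (simp add: n_def)
  next
    case False
    have "0 = poly p x" using p by simp
    also have "\<dots> = (\<Sum>i\<le>n. coeff p i * x^i)" by (simp add: poly_altdef n_def)
    also have "\<dots> = (\<Sum>i<n. coeff p i * x^i) + x^n"
      using p(1) by (simp add: lessThan_Suc_atMost[symmetric] n_def)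
    finally have xn: "x^n = - (\<Sum>i<n. coeff p i * x^i)" by (simp add: eq_neg_iff_add_eq_0 add.commute)
    have "x^k = x^(k-n) * x^n" using False by (simp flip: power_add)
    also have "\<dots> = - (\<Sum>i<n. coeff p i * x^(k-n+i))"
      unfolding xn by (simp add: sum_distrib_left power_add algebra_simps)
    also have "\<dots> = (\<Sum>i<n. of_int (- (THE c. coeff p i = of_int c)) * x^(k-n+i))"
    proof -
      have "coeff p i = of_int (THE c. coeff p i = of_int c)" for i
      proof -
        obtain c where "coeff p i = of_int c" using p(2) by (auto elim: Ints_cases)
        thus ?thesis by simp
      qed
      hence "(\<Sum>i<n. coeff p i * x^(k-n+i)) = (\<Sum>i<n. of_int (THE c. coeff p i = of_int c) * x^(k-n+i))"
        by metis
      thus ?thesis by (simp add: sum_negf)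
    qed
    finally have eq: "x^k = (\<Sum>i<n. of_int (- (THE c. coeff p i = of_int c)) * x^(k-n+i))" .
    have "inT D (L ^ degree p) (\<Sum>i<n. of_int (- (THE c. coeff p i = of_int c)) * x^(k-n+i))"
      by (rule inT_sum, rule inT_scale, rule less.IH) (use False in auto)
    thus ?thesis using eq by simp
  qed
qed




lemma rat_common_denom:
  fixes a b :: rat
  obtains a1 b1 L :: int where "L > 0" "a = of_int a1 / of_int L" "b = of_int b1 / of_int L"
proof -
  obtain u v where q: "quotient_of a = (u, v)" by (cases "quotient_of a")
  obtain u' v' where q': "quotient_of b = (u', v')" by (cases "quotient_of b")
  have v: "v > 0" "v' > 0" using q q' quotient_of_denom_pos by blast+
  have "a = of_int u / of_int v" "b = of_int u' / of_int v'" using q q' quotient_of_div by blast+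
  hence "a = of_int (u*v') / of_int (v*v')" "b = of_int (u'*v) / of_int (v*v')" using v by simp_all
  moreover have "v*v' > 0" using v by simp
  ultimately show ?thesis using that by blast
qed

lemma algint_half:
  assumes D: "D \<ge> 2" "squarefree D" and ai: "algebraic_int (mk D a b)"
  shows "2*a \<in> \<int> \<and> a^2 - of_int D * b^2 \<in> \<int>"
proof -
  have D0: "D \<ge> 0" using D by simp
  obtain p :: "real poly" where p: "lead_coeff p = 1" "\<forall>i. coeff p i \<in> \<int>" "poly p (mk D a b) = 0"
    using ai by (auto simp: algebraic_int.simps)
  have pQ: "\<forall>i. coeff p i \<in> \<rat>" using p(2) Ints_subset_Rats by blast
  have p': "poly p (mk D a (-b)) = 0" using conj_root[OF D pQ p(3)] .
  obtain a1 b1 L where L: "L > 0" "a = of_int a1 / of_int L" "b = of_int b1 / of_int L"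
    by (rule rat_common_denom)
  define x where "x = mk D a b"
  define x' where "x' = mk D a (-b)"
  define M where "M = L ^ degree p"
  have M0: "M > 0" using L by (simp add: M_def)
  have xT: "inT D M (x^k)" for k
    unfolding M_def by (rule alg_powers[OF D0 L(1) _ p(1,2)]) (use L p in \<open>simp_all add: x_def\<close>)
  have x'T: "inT D M (x'^k)" for k
    unfolding M_def by (rule alg_powers[OF D0 L(1) _ p(1,2), of _ a1 "-b1"]) (use L p' in \<open>simp_all add: x'_def\<close>)
  define N where "N = a^2 - of_int D * b^2"
  define s where "s = 2*a"
  have prod: "x * x' = of_rat N"
    by (simp add: x_def x'_def mk_mult[OF D0] N_def mk_rat[of _ D] power2_eq_square mult.assoc)
  have sum: "x + x' = of_rat s"
    by (simp add: x_def x'_def mk_add s_def mk_rat[of _ D])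
  have "of_int (M*M) * N^k \<in> \<int>" for k
  proof -
    obtain A B where AB: "x^k = mk D (of_int A / of_int M) (of_int B / of_int M)" using xT[of k] inT_def by blast
    obtain C E where CE: "x'^k = mk D (of_int C / of_int M) (of_int E / of_int M)" using x'T[of k] inT_def by blast
    have "mk D (N^k) 0 = x^k * x'^k" by (simp add: prod of_rat_power flip: power_mult_distrib mk_rat)
    also have "\<dots> = mk D (of_int A / of_int M * (of_int C / of_int M) + of_int D * (of_int B / of_int M) * (of_int E / of_int M))
        (of_int A / of_int M * (of_int E / of_int M) + of_int B / of_int M * (of_int C / of_int M))"
      by (simp add: AB CE mk_mult[OF D0])
    finally have "N^k = of_int A / of_int M * (of_int C / of_int M) + of_int D * (of_int B / of_int M) * (of_int E / of_int M)"
      using mk_inj[OF D] by blast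
    hence "of_int (M*M) * N^k = of_int (A*C + D*B*E)" using M0 by (simp add: field_simps)
    thus ?thesis by simp
  qed
  hence NZ: "N \<in> \<int>" using rat_int_from_powers[of "M*M" N] M0 by simp
  have x2: "x^2 = of_rat s * x - of_rat N" using sum prod by (simp add: power2_eq_square algebra_simps flip: sum prod)
  have x'2: "x'^2 = of_rat s * x' - of_rat N" using sum prod by (simp add: power2_eq_square algebra_simps flip: sum prod)
  have rec: "y^Suc (Suc k) = of_rat s * y^Suc k - of_rat N * y^k" if "y^2 = of_rat s * y - of_rat N" for y :: real and k
  proof -
    have "y^Suc (Suc k) = y^k * y^2" by (simp add: power2_eq_square algebra_simps)
    thus ?thesis using that by (simp add: algebra_simps)
  qed
  have tr: "x^k + x'^k = of_rat (tt s N k) \<and> x^Suc k + x'^Suc k = of_rat (tt s N (Suc k))" for k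
  proof (induction k)
    case 0 show ?case using sum by simp
  next
    case (Suc k)
    have "x^Suc (Suc k) + x'^Suc (Suc k) = of_rat s * (x^Suc k + x'^Suc k) - of_rat N * (x^k + x'^k)"
      using rec[OF x2, of k] rec[OF x'2, of k] by (simp add: algebra_simps)
    also have "\<dots> = of_rat (tt s N (Suc (Suc k)))" using Suc by (simp add: of_rat_mult of_rat_diff)
    finally show ?case using Suc by simp
  qed
  have "of_int M * tt s N k \<in> \<int>" for k
  proof -
    have "inT D M (x^k + x'^k)" using xT x'T inT_add by blast
    then obtain P Q where PQ: "x^k + x'^k = mk D (of_int P / of_int M) (of_int Q / of_int M)" using inT_def by blast
    hence "mk D (tt s N k) 0 = mk D (of_int P / of_int M) (of_int Q / of_int M)" using tr[of k] by (simp add: mk_rat[of _ D])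
    hence "tt s N k = of_int P / of_int M" using mk_inj[OF D] by blast
    hence "of_int M * tt s N k = of_int P" using M0 by simp
    thus ?thesis by simp
  qed
  hence "s \<in> \<int>" using rat_int_from_trace[OF NZ M0] by blast
  thus ?thesis using NZ by (simp add: s_def N_def)
qed




lemma sqf_rat_int:
  fixes q :: rat
  assumes "squarefree D" "of_int D * q^2 \<in> \<int>"
  shows "q \<in> \<int>"
proof -
  obtain u v where qq: "quotient_of q = (u, v)" by (cases "quotient_of q")
  have v0: "v > 0" using qq quotient_of_denom_pos by blast
  have cp: "coprime u v" using qq quotient_of_coprime by blast
  have q: "q = of_int u / of_int v" using qq quotient_of_div by blast
  obtain m where m: "of_int D * q^2 = (of_int m :: rat)" using assms(2) by (auto elim: Ints_cases)
  hence "of_int D * (of_int u)^2 = (of_int m * (of_int v)^2 :: rat)" using v0 q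
    by (simp add: power_divide field_simps)
  hence "D * u^2 = m * v^2" by (metis of_int_eq_iff of_int_mult of_int_power)
  hence "v^2 dvd D * u^2" by simp
  moreover have "coprime (v^2) (u^2)" using cp by (simp add: coprime_commute)
  ultimately have "v^2 dvd D" by (simp add: coprime_dvd_mult_left_iff)
  hence "v dvd 1" using assms(1) squarefreeD by blast
  hence "v = 1" using v0 by simp
  thus ?thesis using q by simp
qed

lemma sqf_unique:
  fixes D s n k :: int
  assumes "squarefree D" "squarefree s" "D * n^2 = s * k^2" "n \<noteq> 0"
  shows "s = D"
proof -
  have "gcd n k \<noteq> 0" using assms(4) by simp
  then obtain n' k' where nk: "n = n' * gcd n k" "k = k' * gcd n k" "coprime n' k'"
    using gcd_coprime_exists by blast
  define g where "g = gcd n k"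
  have g0: "g \<noteq> 0" using assms(4) by (simp add: g_def)
  have nk': "n = n'*g" "k = k'*g" unfolding g_def by (rule nk(1), rule nk(2))
  have "D*(n'*g)^2 = s*(k'*g)^2" using assms(3) by (simp only: nk'[symmetric])
  hence "(D * n'^2) * g^2 = (s * k'^2) * g^2" by (simp add: power_mult_distrib algebra_simps)
  hence eq: "D * n'^2 = s * k'^2" using g0 by simp
  have "k'^2 dvd D * n'^2" using eq by simp
  moreover have "coprime (k'^2) (n'^2)" using nk(3) by (simp add: coprime_commute)
  ultimately have "k'^2 dvd D" by (simp add: coprime_dvd_mult_left_iff)
  hence "k' dvd 1" using assms(1) squarefreeD by blast
  hence "\<bar>k'\<bar> = 1" by (simp add: zdvd1_eq)
  hence k1: "k'^2 = 1" by (metis power2_abs one_power2)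
  have "n'^2 dvd s * k'^2" using eq by (metis dvd_triv_right mult.commute)
  moreover have "coprime (n'^2) (k'^2)" using nk(3) by simp
  ultimately have "n'^2 dvd s" by (simp add: coprime_dvd_mult_left_iff)
  hence "n' dvd 1" using assms(2) squarefreeD by blast
  hence "\<bar>n'\<bar> = 1" by (simp add: zdvd1_eq)
  hence n1: "n'^2 = 1" by (metis power2_abs one_power2)
  show ?thesis using eq k1 n1 by simp
qed

lemma sqfree_part_eq:
  fixes m D n :: int
  assumes "squarefree D" "m = D * n^2" "m \<noteq> 0"
  shows "sqfree_part m = D"
  unfolding sqfree_part_def
proof (rule the_equality)
  show "squarefree D \<and> (\<exists>n. m = D * n^2)" using assms by blast
next
  fix s assume "squarefree s \<and> (\<exists>n. m = s * n^2)"
  then obtain k where "squarefree s" "m = s * k^2" by blast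
  have n0: "n \<noteq> 0" using assms(2,3) by auto
  have e: "D * n^2 = s * k^2" using assms(2) \<open>m = s * k^2\<close> by simp
  show "s = D" by (rule sqf_unique[OF assms(1) \<open>squarefree s\<close> e n0])
qed

lemma sqfree_part_decomp:
  fixes m :: int
  assumes "m \<noteq> 0"
  shows "squarefree (sqfree_part m) \<and> (\<exists>n. m = sqfree_part m * n^2)"
proof -
  have "m = squarefree_part m * (square_part m)^2" by (rule squarefree_decompose)
  moreover have "squarefree (squarefree_part m)" by simp
  ultimately have "sqfree_part m = squarefree_part m"
    using sqfree_part_eq[of "squarefree_part m" m "square_part m"] assms by simp
  thus ?thesis using squarefree_decompose[of m] by (metis squarefree_squarefree_part)
qed

lemma qfield_repr:
  assumes "x \<in> qfield D"
  obtains a b where "x = mk D a b"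
  using assms by (auto simp: qfield_def mk_def)

lemma mk_in_qfield: "mk D a b \<in> qfield D"
  by (auto simp: qfield_def mk_def)

lemma qnorm_mult:
  assumes D: "D \<ge> 2" "squarefree D" and "x \<in> qfield D" "y \<in> qfield D"
  shows "x * y \<in> qfield D \<and> qnorm D (x * y) = qnorm D x * qnorm D y"
proof -
  obtain a b where x: "x = mk D a b" using assms(3) by (rule qfield_repr)
  obtain c e where y: "y = mk D c e" using assms(4) by (rule qfield_repr)
  have "x * y = mk D (a*c + of_int D*b*e) (a*e + b*c)" using D by (simp add: x y mk_mult)
  thus ?thesis using D by (simp add: x y qnorm_mk mk_in_qfield power2_eq_square algebra_simps)
qed

lemma qnorm_pow:
  assumes D: "D \<ge> 2" "squarefree D" and "x \<in> qfield D"
  shows "x ^ k \<in> qfield D \<and> qnorm D (x ^ k) = qnorm D x ^ k"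
proof (induction k)
  case 0
  have one: "(1::real) = mk D 1 0" by (simp add: mk_def)
  have "qnorm D (mk D 1 0) = 1" by (simp add: qnorm_mk[OF D])
  thus ?case using mk_in_qfield[of D 1 0] by (simp add: one[symmetric])
next
  case (Suc k)
  have "x ^ Suc k = x^k * x" by (simp add: mult.commute)
  with qnorm_mult[OF D Suc.IH[THEN conjunct1] assms(3)] Suc.IH show ?case by (simp add: mult.commute)
qed




lemma fu_facts:
  assumes D: "D \<ge> 2" "squarefree D" and u: "u \<in> qunits D"
  obtains a0 b0 where "u = mk D a0 b0" "2*a0 \<in> \<int>" "qnorm D u = 1 \<or> qnorm D u = -1"
proof -
  have uq: "u \<in> qfield D" "algebraic_int u" "u \<noteq> 0" "inverse u \<in> qfield D" "algebraic_int (inverse u)"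
    using u by (auto simp: qunits_def ring_of_integers_def)
  obtain a0 b0 where u0: "u = mk D a0 b0" using uq(1) by (rule qfield_repr)
  obtain a1 b1 where u1: "inverse u = mk D a1 b1" using uq(4) by (rule qfield_repr)
  have h0: "2*a0 \<in> \<int> \<and> a0^2 - of_int D * b0^2 \<in> \<int>" using algint_half[OF D] uq(2) u0 by simp
  have h1: "a1^2 - of_int D * b1^2 \<in> \<int>" using algint_half[OF D] uq(5) u1 by simp
  have "qnorm D (u * inverse u) = qnorm D u * qnorm D (inverse u)"
    using qnorm_mult[OF D uq(1) uq(4)] by simp
  moreover have "u * inverse u = mk D 1 0" using uq(3) by (simp add: mk_def)
  ultimately have "qnorm D u * qnorm D (inverse u) = 1" using qnorm_mk[OF D, of 1 0] by simp
  moreover obtain i where i: "qnorm D u = of_int i" using h0 u0 qnorm_mk[OF D] by (auto elim: Ints_cases)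
  moreover obtain j where j: "qnorm D (inverse u) = of_int j" using h1 u1 qnorm_mk[OF D] by (auto elim: Ints_cases)
  ultimately have "i * j = 1" by (metis of_int_eq_1_iff of_int_mult)
  hence "i = 1 \<or> i = -1" using pos_zmult_eq_1_iff_lemma by blast
  hence "qnorm D u = 1 \<or> qnorm D u = -1" using i by auto
  thus ?thesis using that u0 h0 by blast
qed

lemma pow_half_int:
  assumes D: "D \<ge> 2" "squarefree D" and n: "\<alpha>^2 - of_int D * \<beta>^2 = 1" and h: "2*\<alpha> \<in> \<int>"
  shows "(\<exists>A B. (mk D \<alpha> \<beta>)^r = mk D A B \<and> 2*A \<in> \<int>) \<and> (\<exists>A B. (mk D \<alpha> \<beta>)^Suc r = mk D A B \<and> 2*A \<in> \<int>)"
proof (induction r)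
  case 0
  have "(mk D \<alpha> \<beta>)^0 = mk D 1 0" by (simp add: mk_def)
  moreover have "(2::rat) * 1 \<in> \<int>" by simp
  moreover have "(mk D \<alpha> \<beta>)^Suc 0 = mk D \<alpha> \<beta>" by simp
  ultimately show ?case using h by blast
next
  case (Suc r)
  have D0: "D \<ge> 0" using D by simp
  define y where "y = mk D \<alpha> \<beta>"
  have y2: "y * y = of_rat (2*\<alpha>) * y - 1"
  proof -
    have "y * y = mk D (\<alpha>*\<alpha> + of_int D*\<beta>*\<beta>) (\<alpha>*\<beta> + \<beta>*\<alpha>)" by (simp add: y_def mk_mult[OF D0])
    also have "\<dots> = mk D (2*\<alpha>*\<alpha> - 1) (2*\<alpha>*\<beta>)"
    proof -
      have "\<alpha>*\<alpha> + of_int D*\<beta>*\<beta> = 2*\<alpha>*\<alpha> - 1" using n by (simp add: power2_eq_square algebra_simps)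
      moreover have "\<alpha>*\<beta> + \<beta>*\<alpha> = 2*\<alpha>*\<beta>" by simp
      ultimately show ?thesis by (simp only:)
    qed
    also have "\<dots> = of_rat (2*\<alpha>) * y - 1"
    proof -
      have c1: "of_rat (2*\<alpha>) * y = mk D (2*\<alpha>*\<alpha>) (2*\<alpha>*\<beta>)" by (simp only: y_def mk_scale mult.assoc)
      have one: "(1::real) = mk D 1 0" by (simp add: mk_def)
      show ?thesis by (simp only: c1 one mk_diff diff_0_right)
    qed
    finally show ?thesis .
  qed
  obtain A0 B0 where AB0: "y^r = mk D A0 B0" "2*A0 \<in> \<int>" using Suc.IH y_def by blast
  obtain A1 B1 where AB1: "y^Suc r = mk D A1 B1" "2*A1 \<in> \<int>" using Suc.IH y_def by blast
  have "y^Suc (Suc r) = y^r * (y * y)" by (simp add: algebra_simps)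
  also have "\<dots> = of_rat (2*\<alpha>) * y^Suc r - y^r" by (simp add: y2 algebra_simps)
  also have "\<dots> = mk D (2*\<alpha>*A1 - A0) (2*\<alpha>*B1 - B0)" by (simp only: AB0(1) AB1(1) mk_scale mk_diff)
  finally have e: "y^Suc (Suc r) = mk D (2*\<alpha>*A1 - A0) (2*\<alpha>*B1 - B0)" .
  have "2*(2*\<alpha>*A1 - A0) = (2*\<alpha>)*(2*A1) - 2*A0" by (simp add: algebra_simps)
  moreover have "(2*\<alpha>)*(2*A1) - 2*A0 \<in> \<int>" using h AB0(2) AB1(2) by (rule_tac Ints_diff, rule_tac Ints_mult)
  ultimately have "2*(2*\<alpha>*A1 - A0) \<in> \<int>" by (simp only:)
  thus ?case using e AB1 y_def by blast
qed




theorem lemma2p1: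
  fixes D :: int and u_f :: real and d :: int
  assumes "D \<ge> 2" and "squarefree D"
    and "is_fundamental_unit D u_f"
  defines "u_D \<equiv> (if qnorm D u_f = -1 then u_f ^ 2 else u_f)"
  shows "(d > 0 \<and> (d - 1)^2 - 4 \<noteq> 0 \<and> sqfree_part ((d - 1)^2 - 4) = D) \<longleftrightarrow>
         (\<exists>r :: nat. r \<ge> 1 \<and> of_int (d - 1) / 2 = rat_part D (u_D ^ r))"
proof -
  have D: "D \<ge> 2" "squarefree D" using assms(1,2) .
  have D0: "D \<ge> 0" using D by simp
  have uq: "u_f \<in> qunits D" "u_f > 1" "\<forall>v\<in>qunits D. \<exists>n. v = u_f powi n \<or> v = - (u_f powi n)"
    using assms(3) unfolding is_fundamental_unit_def by auto
  obtain a0 b0 where u0: "u_f = mk D a0 b0" "2*a0 \<in> \<int>" and nrm: "qnorm D u_f = 1 \<or> qnorm D u_f = -1"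
    using fu_facts[OF D uq(1)] by blast
  have ufq: "u_f \<in> qfield D" using u0 mk_in_qfield by simp
  have uDq: "u_D \<in> qfield D" "qnorm D u_D = 1" "u_D > 1"
  proof -
    show "u_D \<in> qfield D" using qnorm_pow[OF D ufq, of 2] ufq by (simp add: u_D_def)
    show "qnorm D u_D = 1" using qnorm_pow[OF D ufq, of 2] nrm by (auto simp: u_D_def)
    show "u_D > 1" using uq(2) by (simp add: u_D_def)
  qed
  obtain \<alpha> \<beta> where uD: "u_D = mk D \<alpha> \<beta>" using uDq(1) by (rule qfield_repr)
  have n\<alpha>: "\<alpha>^2 - of_int D * \<beta>^2 = 1" using uDq(2) uD qnorm_mk[OF D] by simp
  have h\<alpha>: "2*\<alpha> \<in> \<int>"
  proof (cases "qnorm D u_f = -1")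
    case True
    have "u_D = mk D (a0*a0 + of_int D*b0*b0) (a0*b0 + b0*a0)"
      using True by (simp add: u_D_def u0 power2_eq_square mk_mult[OF D0])
    hence \<alpha>: "\<alpha> = a0*a0 + of_int D*b0*b0" using uD mk_inj[OF D] by simp
    have "a0^2 - of_int D * b0^2 = -1" using True u0 qnorm_mk[OF D] by simp
    hence "2*\<alpha> = (2*a0)*(2*a0) + 2" using \<alpha> by (simp add: power2_eq_square algebra_simps)
    moreover have "(2*a0)*(2*a0) + 2 \<in> \<int>" using u0(2) by (rule_tac Ints_add, rule_tac Ints_mult) auto
    ultimately show ?thesis by simp
  next
    case False
    hence "u_D = u_f" by (simp add: u_D_def)
    hence "\<alpha> = a0" using uD u0 mk_inj[OF D] by simp
    thus ?thesis using u0(2) by simp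
  qed
  show ?thesis
  proof
    assume "d > 0 \<and> (d - 1)^2 - 4 \<noteq> 0 \<and> sqfree_part ((d - 1)^2 - 4) = D"
    hence d0: "d > 0" and m0: "(d - 1)^2 - 4 \<noteq> 0" and sp: "sqfree_part ((d - 1)^2 - 4) = D" by auto
    obtain n where nn: "(d - 1)^2 - 4 = D * n^2" using sqfree_part_decomp[OF m0] sp by auto
    define t where "t = d - 1"
    have t0: "t \<ge> 0" using d0 by (simp add: t_def)
    have tn: "t^2 = 4 + D * n^2" using nn by (simp add: t_def)
    have n0: "n \<noteq> 0" using nn m0 by auto
    have "n^2 > 0" using n0 by simp
    hence n1: "n^2 \<ge> 1" by linarith
    have "D * n^2 \<ge> D * 1" using n1 D0 by (rule mult_left_mono)
    hence Dn2: "D * n^2 \<ge> 2" using D by linarith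
    have t3: "t \<ge> 3"
    proof (rule ccontr)
      assume "\<not> t \<ge> 3"
      hence "t \<le> 2" by simp
      hence "t * t \<le> 2 * 2" using t0 by (intro mult_mono) auto
      thus False using tn Dn2 by (simp add: power2_eq_square)
    qed
    define nn' where "nn' = \<bar>n\<bar>"
    have nn'2: "nn'^2 = n^2" by (simp add: nn'_def)
    define v where "v = mk D (of_int t / 2) (of_int nn' / 2)"
    define w where "w = mk D (of_int t / 2) (- (of_int nn' / 2))"
    have tn': "(of_int t)^2 - of_int D * (of_int nn')^2 = (4::rat)"
    proof -
      have "of_int (t^2 - D * nn'^2) = (4::rat)" using tn nn'2 by simp
      thus ?thesis by simp
    qed
    have vw: "v * w = 1"
    proof -
      have "v * w = mk D ((of_int t / 2)*(of_int t / 2) + of_int D * (of_int nn' / 2) * (-(of_int nn'/2)))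
                    ((of_int t / 2) * (-(of_int nn'/2)) + (of_int nn' / 2) * (of_int t / 2))"
        by (simp add: v_def w_def mk_mult[OF D0])
      also have "\<dots> = mk D 1 0" using tn' by (simp add: power2_eq_square field_simps)
      finally show ?thesis by (simp add: mk_def)
    qed
    have vpw: "v + w = of_int t"
    proof -
      have "v + w = mk D (of_int t) 0" by (simp add: v_def w_def mk_add)
      thus ?thesis by (simp add: mk_def)
    qed
    have v1: "v > 1"
    proof -
      have "v = of_int t / 2 + of_int nn' / 2 * sqrt (of_int D)" by (simp add: v_def mk_def of_rat_divide)
      moreover have "of_int nn' / 2 * sqrt (real_of_int D) \<ge> 0" using D0 by (simp add: nn'_def)
      moreover have "(of_int t :: real) \<ge> 3" using t3 by simp
      ultimately show ?thesis by linarith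
    qed
    define P :: "real poly" where "P = [:1, - of_int t, 1:]"
    have Pc: "\<forall>i. coeff P i \<in> \<int>" by (auto simp: P_def coeff_pCons split: nat.splits)
    have Pl: "lead_coeff P = 1" by (simp add: P_def)
    have Pv: "poly P v = 0"
    proof -
      have e: "poly P v = 1 - of_int t * v + v*v" by (simp add: P_def algebra_simps)
      have "of_int t * v = v*v + v*w" unfolding vpw[symmetric] by (simp add: algebra_simps)
      thus ?thesis using e vw by linarith
    qed
    have Pw: "poly P w = 0"
    proof -
      have e: "poly P w = 1 - of_int t * w + w*w" by (simp add: P_def algebra_simps)
      have "of_int t * w = w*w + v*w" unfolding vpw[symmetric] by (simp add: algebra_simps)
      thus ?thesis using e vw by linarith
    qed
    have iv: "inverse v = w" using vw by (rule inverse_unique)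
    have vU: "v \<in> qunits D"
      unfolding qunits_def ring_of_integers_def
      using iv v1 Pc Pl Pv Pw mk_in_qfield[of D] v_def w_def
      by (auto intro!: algebraic_int.intros[of P])
    obtain k where "v = u_f powi k \<or> v = - (u_f powi k)" using uq(3) vU by blast
    moreover have "u_f powi k > 0" using uq(2) by simp
    ultimately have vk: "v = u_f powi k" using v1 by auto
    have k0: "k > 0"
    proof (rule ccontr)
      assume "\<not> k > 0"
      hence "u_f powi k = inverse u_f ^ nat (-k)" by (simp add: power_int_def)
      moreover have "inverse u_f ^ nat (-k) \<le> 1" using uq(2) by (intro power_le_one) (auto simp: inverse_le_1_iff)
      ultimately show False using vk v1 by simp
    qed
    define K where "K = nat k"
    have vK: "v = u_f ^ K" using vk k0 by (simp add: K_def power_int_def)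
    have K1: "K \<ge> 1" using k0 by (simp add: K_def)
    have qv: "qnorm D v = 1" using tn' by (simp add: v_def qnorm_mk[OF D] power_divide field_simps)
    have rv: "rat_part D v = of_int t / 2" by (simp add: v_def rat_part_mk[OF D])
    obtain r where r: "r \<ge> 1" "v = u_D ^ r"
    proof (cases "qnorm D u_f = -1")
      case True
      have "qnorm D v = (-1)^K" using qnorm_pow[OF D ufq, of K] True vK by simp
      hence "even K" using qv by (metis neg_one_odd_power one_neq_neg_one)
      then obtain r where "K = 2*r" by blast
      hence "v = u_D ^ r" "r \<ge> 1" using vK K1 True by (simp_all add: u_D_def power_mult)
      thus ?thesis using that by blast
    next
      case False
      thus ?thesis using that[of K] vK K1 by (simp add: u_D_def)
    qed
    show "\<exists>r :: nat. r \<ge> 1 \<and> of_int (d - 1) / 2 = rat_part D (u_D ^ r)"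
      using r rv by (intro exI[of _ r]) (simp add: t_def)
  next
    assume "\<exists>r :: nat. r \<ge> 1 \<and> of_int (d - 1) / 2 = rat_part D (u_D ^ r)"
    then obtain r :: nat where r1: "r \<ge> 1" and rp: "of_int (d - 1) / 2 = rat_part D (u_D ^ r)" by blast
    obtain A B where AB: "u_D ^ r = mk D A B" "2*A \<in> \<int>"
      using pow_half_int[OF D n\<alpha> h\<alpha>, of r] uD by blast
    have A: "A = of_int (d - 1) / 2" using rp AB rat_part_mk[OF D] by simp
    have nAB: "A^2 - of_int D * B^2 = 1"
      using qnorm_pow[OF D uDq(1), of r] uDq(2) AB qnorm_mk[OF D] by simp
    define u where "u = u_D ^ r"
    have u1: "u > 1" using uDq(3) r1 by (simp add: u_def)
    define w where "w = mk D A (-B)"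
    have uw: "u * w = 1"
    proof -
      have "u * w = mk D (A*A + of_int D*B*(-B)) (A*(-B) + B*A)" by (simp add: u_def AB w_def mk_mult[OF D0])
      also have "\<dots> = mk D 1 0" using nAB by (simp add: power2_eq_square algebra_simps)
      finally show ?thesis by (simp add: mk_def)
    qed
    have upw: "u + w = of_int (d - 1)"
    proof -
      have "u + w = mk D (2*A) 0" by (simp add: u_def AB w_def mk_add)
      moreover have "2*A = of_int (d - 1)" using A by simp
      ultimately show ?thesis by (simp add: mk_def of_rat_diff)
    qed
    have "(u + w - 2) * u = (u - 1)^2" using uw by (simp add: algebra_simps power2_eq_square)
    moreover have "(u - 1)^2 > 0" using u1 by simp
    ultimately have "(u + w - 2) * u > 0" by simp
    hence "u + w - 2 > 0" using u1 by (simp add: zero_less_mult_iff)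
    hence "real_of_int (d - 1) > 2" using upw by simp
    hence d3: "d - 1 \<ge> 3" by linarith
    have "of_int D * (2*B)^2 = of_int ((d - 1)^2 - 4)"
    proof -
      have "of_int D * (2*B)^2 = 4 * (A^2 - 1)" using nAB by (simp add: power2_eq_square algebra_simps)
      also have "\<dots> = of_int ((d - 1)^2 - 4)"
      proof -
        have dA: "(of_int d :: rat) = 1 + 2*A" using A by simp
        show ?thesis by (simp add: dA power2_eq_square algebra_simps)
      qed
      finally show ?thesis .
    qed
    note eqD = this
    have "of_int D * (2*B)^2 \<in> \<int>" unfolding eqD by (rule Ints_of_int)
    hence "2*B \<in> \<int>" by (rule sqf_rat_int[OF D(2)])
    then obtain n where n: "2*B = of_int n" by (rule Ints_cases)
    have "of_int (D * n^2) = of_int D * (2*B)^2" unfolding n by simp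
    hence "of_int (D * n^2) = (of_int ((d - 1)^2 - 4) :: rat)" unfolding eqD .
    hence eqm: "(d - 1)^2 - 4 = D * n^2" by (simp only: of_int_eq_iff)
    have m0: "(d - 1)^2 - 4 \<noteq> 0"
    proof -
      have "(d - 1) * (d - 1) \<ge> 3 * 3" using d3 by (intro mult_mono) auto
      thus ?thesis by (simp add: power2_eq_square)
    qed
    show "d > 0 \<and> (d - 1)^2 - 4 \<noteq> 0 \<and> sqfree_part ((d - 1)^2 - 4) = D"
      using d3 m0 sqfree_part_eq[OF D(2) eqm m0] by simp
  qed
qed


end
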